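(* Let $n\ge2$ and let $\sigma$ be a $*$-representation of $\mathcal{E}_n$ on $\mathcal{H}$ with generators $S_i=\sigma(\mathfrak{s}_i)$. Then $S=(S_1,\dots,S_n)$ has a wandering vector if and only if there exists $X\in\mathcal{X}(\sigma)$ which is bounded below.
   Context: $\mathcal{E}_n$ is the universal C*-algebra generated by isometries $\mathfrak{s}_1,\dots,\mathfrak{s}_n$ with pairwise orthogonal ranges. A vector $\eta\in\mathcal{H}$ is wandering if $\{S_w\eta:w\in\mathbb{F}_n^+\}$ is orthonormal, where $\mathbb{F}_n^+$ is the free semigroup on $n$ letters and $S_w=S_{i_1}\cdots S_{i_k}$ for $w=i_1\cdots i_k$. $L_i$ are the left creation operators $L_i\xi_w=\xi_{iw}$ on the Fock space $\ell^2(\mathbb{F}_n^+)$. $\mathcal{X}(\sigma)$ is the set of bounded $X:\ell^2(\mathbb{F}_n^+)\to\mathcal{H}$ with $S_iX=XL_i$ for $1\le i\le n$. *)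

theory Defs
  imports "HOL-Analysis.Analysis"
begin

class complex_vector = real_vector +
  fixes scaleC :: "complex \<Rightarrow> 'a \<Rightarrow> 'a"
  assumes scaleC_add_right: "scaleC a (x + y) = scaleC a x + scaleC a y"
    and scaleC_add_left: "scaleC (a + b) x = scaleC a x + scaleC b x"
    and scaleC_scaleC: "scaleC a (scaleC b x) = scaleC (a * b) x"
    and scaleC_one: "scaleC 1 x = x"
    and scaleR_scaleC: "scaleR r x = scaleC (complex_of_real r) x"

class complex_normed_vector = complex_vector + real_normed_vector +
  assumes norm_scaleC: "norm (scaleC a x) = cmod a * norm x"

class complex_inner = complex_normed_vector +
  fixes cinner :: "'a \<Rightarrow> 'a \<Rightarrow> complex"
  assumes cinner_commute: "cinner x y = cnj (cinner y x)"
    and cinner_add_left: "cinner (x + y) z = cinner x z + cinner y z"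
    and cinner_scaleC_left: "cinner (scaleC r x) y = cnj r * cinner x y"
    and cinner_Re_nonneg: "0 \<le> Re (cinner x x)"
    and cinner_eq_zero_iff: "cinner x x = 0 \<longleftrightarrow> x = 0"
    and norm_eq_sqrt_cinner: "norm x = sqrt (Re (cinner x x))"

class chilbert_space = complex_inner + complete_space

definition clinear_op :: "('a::complex_vector \<Rightarrow> 'b::complex_vector) \<Rightarrow> bool" where
  "clinear_op T \<longleftrightarrow> (\<forall>x y. T (x + y) = T x + T y) \<and> (\<forall>c x. T (scaleC c x) = scaleC c (T x))"

definition isometry :: "('a::complex_inner \<Rightarrow> 'a) \<Rightarrow> bool" where
  "isometry T \<longleftrightarrow> clinear_op T \<and> (\<forall>x. norm (T x) = norm x)"

text \<open>A *-representation sigma of E_n on H is the same as an n-tuple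
  S_0,...,S_(n-1) (S_i = sigma(s_i)) of isometries on H with pairwise orthogonal ranges
  (universal property of E_n). Generators are indexed 0..n-1.\<close>
definition En_rep :: "nat \<Rightarrow> (nat \<Rightarrow> 'a::complex_inner \<Rightarrow> 'a) \<Rightarrow> bool" where
  "En_rep n S \<longleftrightarrow> (\<forall>i<n. isometry (S i)) \<and>
     (\<forall>i<n. \<forall>j<n. i \<noteq> j \<longrightarrow> (\<forall>x y. cinner (S i x) (S j y) = 0))"

text \<open>Free semigroup F_n^+ on n letters: finite words (lists) over {0..<n}.\<close>
definition words :: "nat \<Rightarrow> nat list set" where
  "words n = {w. set w \<subseteq> {..<n}}"

definition S_word :: "(nat \<Rightarrow> 'a \<Rightarrow> 'a) \<Rightarrow> nat list \<Rightarrow> 'a \<Rightarrow> 'a" where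
  "S_word S w = foldr (\<lambda>i T. S i \<circ> T) w id"

definition wandering :: "nat \<Rightarrow> (nat \<Rightarrow> 'a::complex_inner \<Rightarrow> 'a) \<Rightarrow> 'a \<Rightarrow> bool" where
  "wandering n S \<eta> \<longleftrightarrow>
     (\<forall>v\<in>words n. \<forall>w\<in>words n.
        cinner (S_word S v \<eta>) (S_word S w \<eta>) = (if v = w then 1 else 0))"

definition fock :: "nat \<Rightarrow> (nat list \<Rightarrow> complex) set" where
  "fock n = {f. (\<forall>w. w \<notin> words n \<longrightarrow> f w = 0) \<and>
                 (\<lambda>w. (cmod (f w))\<^sup>2) summable_on UNIV}"

definition fock_norm :: "(nat list \<Rightarrow> complex) \<Rightarrow> real" where
  "fock_norm f = sqrt (\<Sum>\<^sub>\<infinity>w. (cmod (f w))\<^sup>2)"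

text \<open>L_i xi_w = xi_(iw).\<close>
definition Lcre :: "nat \<Rightarrow> (nat list \<Rightarrow> complex) \<Rightarrow> nat list \<Rightarrow> complex" where
  "Lcre i f w = (case w of [] \<Rightarrow> 0 | j # v \<Rightarrow> if j = i then f v else 0)"

definition bounded_fock_map :: "nat \<Rightarrow> ((nat list \<Rightarrow> complex) \<Rightarrow> 'a::complex_normed_vector) \<Rightarrow> bool" where
  "bounded_fock_map n X \<longleftrightarrow>
     (\<forall>f\<in>fock n. \<forall>g\<in>fock n. X (\<lambda>w. f w + g w) = X f + X g) \<and>
     (\<forall>c. \<forall>f\<in>fock n. X (\<lambda>w. c * f w) = scaleC c (X f)) \<and>
     (\<exists>K. \<forall>f\<in>fock n. norm (X f) \<le> K * fock_norm f)"

definition intertwiners :: "nat \<Rightarrow> (nat \<Rightarrow> 'a::complex_normed_vector \<Rightarrow> 'a)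
      \<Rightarrow> ((nat list \<Rightarrow> complex) \<Rightarrow> 'a) set" where
  "intertwiners n S = {X. bounded_fock_map n X \<and>
     (\<forall>i<n. \<forall>f\<in>fock n. S i (X f) = X (Lcre i f))}"

definition bounded_below_fock :: "nat \<Rightarrow> ((nat list \<Rightarrow> complex) \<Rightarrow> 'a::real_normed_vector) \<Rightarrow> bool" where
  "bounded_below_fock n X \<longleftrightarrow> (\<exists>c>0. \<forall>f\<in>fock n. c * fock_norm f \<le> norm (X f))"

end

theory Submission
  imports Defs
begin

lemma scaleC_zero_left[simp]: "scaleC 0 x = (0::'a::complex_vector)"
  using scaleC_add_left[of 0 0 x] by simp
lemma scaleC_zero_right[simp]: "scaleC a 0 = (0::'a::complex_vector)"
  using scaleC_add_right[of a 0 0] by simp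
lemma scaleC_minus_left: "scaleC (-a) x = - scaleC a (x::'a::complex_vector)"
  using scaleC_add_left[of a "-a" x] by (simp add: add_eq_0_iff2)
lemma cinner_zero_left[simp]: "cinner 0 y = 0"
  using cinner_add_left[of 0 0 y] by simp
lemma cinner_zero_right[simp]: "cinner x 0 = 0"
  using cinner_commute[of x 0] by simp
lemma cinner_add_right: "cinner x (y+z) = cinner x y + cinner x z"
  using cinner_commute[of x "y+z"] cinner_add_left[of y z x] cinner_commute[of y x] cinner_commute[of z x] by simp
lemma cinner_scaleC_right: "cinner x (scaleC r y) = r * cinner x y"
  using cinner_commute[of x "scaleC r y"] cinner_scaleC_left[of r y x] cinner_commute[of y x] by simp
lemma scaleC_minus1: "scaleC (-1) x = - (x::'a::complex_vector)"
  using scaleR_scaleC[of "-1" x] by simp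
lemma cinner_minus_left: "cinner (-x) y = - cinner x y"
  using cinner_scaleC_left[of "-1" x y] by (simp add: scaleC_minus1)
lemma cinner_minus_right: "cinner x (-y) = - cinner x y"
  using cinner_scaleC_right[of x "-1" y] by (simp add: scaleC_minus1)
lemma cinner_diff_left: "cinner (x - y) z = cinner x z - cinner y z"
  using cinner_add_left[of x "-y" z] by (simp add: cinner_minus_left)
lemma cinner_diff_right: "cinner x (y - z) = cinner x y - cinner x z"
  using cinner_add_right[of x y "-z"] by (simp add: cinner_minus_right)
lemma cinner_sum_left: "cinner (sum g F) y = (\<Sum>i\<in>F. cinner (g i) y)"
  by (induction F rule: infinite_finite_induct) (auto simp: cinner_add_left)
lemma cinner_sum_right: "cinner y (sum g F) = (\<Sum>i\<in>F. cinner y (g i))"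
  by (induction F rule: infinite_finite_induct) (auto simp: cinner_add_right)
lemma cinner_self: "cinner x x = complex_of_real ((norm x)^2)"
proof -
  have "Im (cinner x x) = 0" using cinner_commute[of x x]
    by (metis complex_cnj_cancel_iff complex_cnj_zero_iff complex_eq_iff complex_cnj diff_self cnj.sel(2) add.inverse_neutral neg_equal_zero)
  moreover have "Re (cinner x x) = (norm x)^2"
    using norm_eq_sqrt_cinner[of x] cinner_Re_nonneg[of x] by simp
  ultimately show ?thesis by (simp add: complex_eq_iff)
qed
lemma norm_sq_add: "(norm (x+y))^2 = (norm x)^2 + (norm y)^2 + 2 * Re (cinner x y)"
proof -
  have "cinner (x+y) (x+y) = cinner x x + cinner x y + cinner y x + cinner y y"
    by (simp add: cinner_add_left cinner_add_right)
  then have "(norm (x+y))^2 = Re (cinner x x + cinner x y + cinner y x + cinner y y)"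
    by (metis Re_complex_of_real cinner_self)
  also have "\<dots> = (norm x)^2 + (norm y)^2 + 2 * Re (cinner x y)"
    using cinner_commute[of y x] by (simp add: cinner_self)
  finally show ?thesis .
qed
lemma scaleR_scaleC_comm: "scaleR r (scaleC c x) = scaleC c (scaleR r (x::'a::complex_vector))"
  by (simp add: scaleR_scaleC scaleC_scaleC mult.commute)
lemma bounded_linear_scaleC: "bounded_linear (scaleC c :: 'a::complex_normed_vector \<Rightarrow> 'a)"
  apply (rule bounded_linear_intro[where K="cmod c"])
  by (auto simp: scaleC_add_right scaleR_scaleC_comm norm_scaleC)
lemma isometry_bl: fixes T :: "'a::complex_inner \<Rightarrow> 'a" assumes "isometry T" shows "bounded_linear T"
proof -
  have a: "T (x+y) = T x + T y" "T (scaleC c x) = scaleC c (T x)" for x y c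
    using assms by (auto simp: isometry_def clinear_op_def)
  show ?thesis
    apply (rule bounded_linear_intro[where K=1])
    using a assms by (auto simp: scaleR_scaleC isometry_def)
qed
lemma isometry_cinner: fixes T :: "'a::complex_inner \<Rightarrow> 'a" assumes "isometry T" shows "cinner (T x) (T y) = cinner x y"
proof -
  have a: "T (x+y) = T x + T y" "T (scaleC c x) = scaleC c (T x)" "norm (T x) = norm x" for x y c
    using assms by (auto simp: isometry_def clinear_op_def)
  have re: "Re (cinner (T x) (T y)) = Re (cinner x y)" for x y
    using norm_sq_add[of x y] norm_sq_add[of "T x" "T y"] a(1)[where x=x and y=y] a(3)[of "x+y"] a(3)[of x] a(3)[of y] by simp
  have "Im (cinner u v) = Re (cinner (scaleC \<i> u) v)" for u v :: 'a
    by (simp add: cinner_scaleC_left)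
  then have "Im (cinner (T x) (T y)) = Im (cinner x y)"
    using re[of "scaleC \<i> x" y] a by metis
  with re show ?thesis by (simp add: complex_eq_iff)
qed
lemma S_word_simps[simp]: "S_word S [] = id" "S_word S (i#w) = S i \<circ> S_word S w"
  by (simp_all add: S_word_def)
lemma isometry_comp: "isometry A \<Longrightarrow> isometry B \<Longrightarrow> isometry (A \<circ> B)"
  by (simp add: isometry_def clinear_op_def)
lemma isometry_id: "isometry (id :: 'a::complex_inner \<Rightarrow> 'a)"
  by (simp add: isometry_def clinear_op_def)
lemma S_word_isometry: "(\<forall>i<n. isometry (S i)) \<Longrightarrow> set w \<subseteq> {..<n} \<Longrightarrow> isometry (S_word S w)"
  by (induction w) (auto intro: isometry_comp isometry_id)

lemma pyth_summable:
  fixes g :: "'a \<Rightarrow> 'b::{real_normed_vector, complete_space}"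
  assumes r: "r summable_on A"
    and py: "\<And>F. finite F \<Longrightarrow> F \<subseteq> A \<Longrightarrow> (norm (sum g F))^2 = sum r F"
  shows "g summable_on A"
proof -
  from r obtain L where lim: "(sum r \<longlongrightarrow> L) (finite_subsets_at_top A)"
    unfolding has_sum_def summable_on_def by blast
  have "\<exists>P. eventually P (finite_subsets_at_top A) \<and>
              (\<forall>F F'. P F \<and> P F' \<longrightarrow> dist (sum g F) (sum g F') < e)" if "e>0" for e
  proof -
    define d P where "d = e^2/8" and "P F \<longleftrightarrow> finite F \<and> F \<subseteq> A \<and> dist (sum r F) L < d" for F
    then have "d > 0" using that by (simp add: d_def)
    have ev_P: "eventually P (finite_subsets_at_top A)"
      using lim
      by (auto simp add: P_def[abs_def] \<open>0 < d\<close> eventually_conj_iff eventually_finite_subsets_at_top_weakI tendsto_iff)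
    moreover have "dist (sum g F1) (sum g F2) < e" if "P F1" and "P F2" for F1 F2
    proof -
      from ev_P
      obtain F' where "finite F'" and "F' \<subseteq> A" and P_sup_F': "finite F \<and> F \<supseteq> F' \<and> F \<subseteq> A \<Longrightarrow> P F" for F
        by atomize_elim (simp add: eventually_finite_subsets_at_top)
      define F where "F = F' \<union> F1 \<union> F2"
      have "finite F" and "F \<subseteq> A"
        using F_def P_def[abs_def] that \<open>finite F'\<close> \<open>F' \<subseteq> A\<close> by auto
      have dist_F: "dist (sum r F) L < d"
        by (metis F_def \<open>F \<subseteq> A\<close> P_def P_sup_F' \<open>finite F\<close> le_supE order_refl)
      have dist_F_subset: "dist (sum g F) (sum g F'') < e/2" if F'': "F'' \<subseteq> F" "P F''" for F''
      proof -
        have "dist (sum g F) (sum g F'') = norm (sum g (F-F''))"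
          unfolding dist_norm using \<open>finite F\<close> F'' by (subst sum_diff) auto
        moreover have "(norm (sum g (F-F'')))^2 = sum r (F-F'')"
          using py \<open>finite F\<close> \<open>F \<subseteq> A\<close> by auto
        moreover have "sum r (F-F'') = sum r F - sum r F''"
          using \<open>finite F\<close> F'' by (subst sum_diff) auto
        moreover have "sum r F - sum r F'' < 2 * d"
          using dist_F F'' unfolding P_def dist_real_def by linarith
        ultimately have "(dist (sum g F) (sum g F''))^2 < (e/2)^2"
          by (simp add: d_def power_divide)
        then show ?thesis
          using \<open>e > 0\<close> by (meson power_less_imp_less_base zero_le_dist less_imp_le half_gt_zero)
      qed
      have "dist (sum g F1) (sum g F2) \<le> dist (sum g F) (sum g F1) + dist (sum g F) (sum g F2)"
        by (rule dist_triangle3)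
      also have "\<dots> < e/2 + e/2"
        by (intro add_strict_mono dist_F_subset that) (auto simp: F_def)
      finally show ?thesis by simp
    qed
    ultimately show ?thesis by blast
  qed
  then have "cauchy_filter (filtermap (sum g) (finite_subsets_at_top A))"
    by (simp add: cauchy_filter_metric_filtermap)
  moreover have "complete (UNIV::'b set)"
    by (meson Cauchy_convergent UNIV_I complete_def convergent_def)
  ultimately obtain L' where "(sum g \<longlongrightarrow> L') (finite_subsets_at_top A)"
    using complete_uniform[where S=UNIV] by (force simp add: filterlim_def)
  then show ?thesis
    using summable_on_def has_sum_def by blast
qed

lemma pyth_norm:
  fixes g :: "'a \<Rightarrow> 'b::{real_normed_vector}"
  assumes "(r has_sum R) A" "(g has_sum G) A"
    and py: "\<And>F. finite F \<Longrightarrow> F \<subseteq> A \<Longrightarrow> (norm (sum g F))^2 = sum r F"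
  shows "(norm G)^2 = R"
proof -
  have "((\<lambda>F. (norm (sum g F))^2) \<longlongrightarrow> (norm G)^2) (finite_subsets_at_top A)"
    using assms(2) unfolding has_sum_def by (intro tendsto_intros)
  moreover have "eventually (\<lambda>F. (norm (sum g F))^2 = sum r F) (finite_subsets_at_top A)"
    by (rule eventually_finite_subsets_at_top_weakI) (use py in auto)
  ultimately have "(sum r \<longlongrightarrow> (norm G)^2) (finite_subsets_at_top A)"
    using tendsto_cong by fastforce
  then show ?thesis
    using assms(1) unfolding has_sum_def using tendsto_unique finite_subsets_at_top_neq_bot by blast
qed

lemma fwd:
  fixes S :: "nat \<Rightarrow> 'h::chilbert_space \<Rightarrow> 'h"
  assumes rep: "En_rep n S" and wd: "wandering n S \<eta>"
  shows "\<exists>X\<in>intertwiners n S. bounded_below_fock n X"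
proof -
  define e where "e w = S_word S w \<eta>" for w
  have ortho: "cinner (e v) (e w) = (if v = w then 1 else 0)" if "v\<in>words n" "w\<in>words n" for v w
    using wd that unfolding wandering_def e_def by blast
  have ne: "norm (e w) = 1" if "w \<in> words n" for w
  proof -
    have "complex_of_real ((norm (e w))^2) = 1" using ortho[OF that that] cinner_self[of "e w"] by simp
    then have "(norm (e w))^2 = 1" by (metis of_real_eq_1_iff)
    then show ?thesis using norm_ge_zero[of "e w"] by (simp add: power2_eq_1_iff)
  qed
  define gg where "gg f w = scaleC (f w) (e w)" for f :: "nat list \<Rightarrow> complex" and w
  have py: "(norm (sum (gg f) F))^2 = sum (\<lambda>w. (cmod (f w))^2) F"
    if "finite F" "F \<subseteq> words n" for f F
    using that
  proof (induction F rule: finite_induct)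
    case empty then show ?case by simp
  next
    case (insert x F)
    have "cinner (gg f x) (sum (gg f) F) = 0"
      unfolding cinner_sum_right gg_def
      using insert ortho by (auto simp: cinner_scaleC_left cinner_scaleC_right intro!: sum.neutral)
    moreover have "(norm (gg f x))^2 = (cmod (f x))^2"
      using ne[of x] insert by (simp add: gg_def norm_scaleC)
    ultimately show ?case
      using insert norm_sq_add[of "gg f x" "sum (gg f) F"] by simp
  qed
  define X where "X f = infsum (gg f) (words n)" for f
  have hs: "(gg f has_sum X f) (words n) \<and> norm (X f) = fock_norm f" if "f \<in> fock n" for f
  proof -
    have r: "(\<lambda>w. (cmod (f w))^2) summable_on UNIV" and z: "\<And>w. w \<notin> words n \<Longrightarrow> f w = 0"
      using that by (auto simp: fock_def)
    then have rw: "(\<lambda>w. (cmod (f w))^2) summable_on words n"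
      using summable_on_subset_banach by blast
    have "gg f summable_on words n"
      by (rule pyth_summable[OF rw py]) auto
    then have h: "(gg f has_sum X f) (words n)" by (simp add: X_def)
    have "(norm (X f))^2 = infsum (\<lambda>w. (cmod (f w))^2) (words n)"
      by (rule pyth_norm[OF has_sum_infsum[OF rw] h py]) auto
    also have "\<dots> = infsum (\<lambda>w. (cmod (f w))^2) UNIV"
      by (rule infsum_cong_neutral) (auto simp: z)
    finally have "norm (X f) = fock_norm f"
      unfolding fock_norm_def by (metis norm_ge_zero real_sqrt_unique)
    with h show ?thesis by blast
  qed
  have iso: "isometry (S i)" if "i < n" for i using rep that by (simp add: En_rep_def)
  have bfm: "bounded_fock_map n X"
    unfolding bounded_fock_map_def
  proof (intro conjI ballI allI)
    fix f h assume f: "f \<in> fock n" and h: "h \<in> fock n"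
    have "((\<lambda>w. gg f w + gg h w) has_sum X f + X h) (words n)"
      using hs[OF f] hs[OF h] by (intro has_sum_add) auto
    then show "X (\<lambda>w. f w + h w) = X f + X h"
      unfolding X_def[of "\<lambda>w. f w + h w"] gg_def by (simp add: scaleC_add_left infsumI)
  next
    fix c f assume f: "f \<in> fock n"
    have "((\<lambda>w. scaleC c (gg f w)) has_sum scaleC c (X f)) (words n)"
      using hs[OF f] by (intro has_sum_bounded_linear[OF bounded_linear_scaleC]) auto
    then show "X (\<lambda>w. c * f w) = scaleC c (X f)"
      unfolding X_def[of "\<lambda>w. c * f w"] gg_def by (simp add: scaleC_scaleC infsumI)
  next
    show "\<exists>K. \<forall>f\<in>fock n. norm (X f) \<le> K * fock_norm f"
      by (rule exI[of _ 1]) (use hs in auto)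
  qed
  have inter: "S i (X f) = X (Lcre i f)" if "i < n" "f \<in> fock n" for i f
  proof -
    have lin: "S i (scaleC a x) = scaleC a (S i x)" for a x
      using iso[OF that(1)] by (simp add: isometry_def clinear_op_def)
    have "((\<lambda>w. S i (gg f w)) has_sum S i (X f)) (words n)"
      using hs[OF that(2)] by (intro has_sum_bounded_linear[OF isometry_bl[OF iso[OF that(1)]]]) auto
    then have "((gg (Lcre i f) \<circ> Cons i) has_sum S i (X f)) (words n)"
      by (simp add: gg_def o_def lin e_def Lcre_def)
    then have "(gg (Lcre i f) has_sum S i (X f)) (Cons i ` words n)"
      by (subst has_sum_reindex) auto
    then have "(gg (Lcre i f) has_sum S i (X f)) (words n)"
    proof (subst (asm) has_sum_cong_neutral[where T="words n"])
      show "gg (Lcre i f) x = 0" if "x \<in> words n - Cons i ` words n" for x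
        using that by (cases x) (auto simp: gg_def Lcre_def words_def scaleC_zero_left)
    qed (use that in \<open>auto simp: words_def\<close>)
    then show ?thesis by (simp add: X_def infsumI)
  qed
  have "X \<in> intertwiners n S" using bfm inter by (simp add: intertwiners_def)
  moreover have "bounded_below_fock n X"
    unfolding bounded_below_fock_def by (rule exI[of _ 1]) (use hs in auto)
  ultimately show ?thesis by blast
qed

lemma fock_add: assumes "f \<in> fock n" "g \<in> fock n" shows "(\<lambda>w. f w + g w) \<in> fock n"
proof -
  have s: "(\<lambda>w. 2 * (cmod (f w))^2 + 2 * (cmod (g w))^2) summable_on UNIV"
    using assms by (auto simp: fock_def intro!: summable_on_add summable_on_cmult_right)
  have b: "(cmod (a + b))^2 \<le> 2 * (cmod a)^2 + 2 * (cmod b)^2" for a b :: complex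
  proof -
    have "cmod (a+b) \<le> cmod a + cmod b" by (rule norm_triangle_ineq)
    then have "(cmod (a+b))^2 \<le> (cmod a + cmod b)^2" by (simp add: power_mono)
    also have "\<dots> \<le> 2 * (cmod a)^2 + 2 * (cmod b)^2"
      by (smt (verit) power2_sum sum_squares_bound)
    finally show ?thesis .
  qed
  show ?thesis using assms unfolding fock_def
    by (auto intro!: summable_on_comparison_test[OF s] b)
qed
lemma fock_scale: assumes "f \<in> fock n" shows "(\<lambda>w. a * f w) \<in> fock n"
  using assms by (auto simp: fock_def norm_mult power_mult_distrib intro!: summable_on_cmult_right)
lemma fock_zero: "(\<lambda>w. 0) \<in> fock n"
  by (simp add: fock_def)
lemma fock_delta: "(\<lambda>w. if w = [] then 1 else 0) \<in> fock n"
proof -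
  define G where "G = (\<lambda>w::nat list. (cmod (if w = [] then 1 else 0 :: complex))^2)"
  have "G summable_on {[]}" by simp
  moreover have "G summable_on {[]} \<longleftrightarrow> G summable_on UNIV"
    by (rule summable_on_cong_neutral) (auto simp: G_def)
  ultimately have "G summable_on UNIV" by simp
  then show ?thesis by (auto simp: fock_def words_def G_def)
qed
lemma fock_Lcre: assumes "i < n" "f \<in> fock n" shows "Lcre i f \<in> fock n"
proof -
  define G where "G = (\<lambda>w. (cmod (Lcre i f w))^2)"
  have "(\<lambda>w. (cmod (f w))^2) summable_on UNIV" using assms by (simp add: fock_def)
  then have "(G \<circ> Cons i) summable_on UNIV"
    by (simp add: o_def Lcre_def G_def)
  then have "G summable_on (range (Cons i))"
    by (subst summable_on_reindex) auto
  moreover have "G summable_on (range (Cons i)) \<longleftrightarrow> G summable_on UNIV"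
    by (rule summable_on_cong_neutral) (auto simp: G_def Lcre_def split: list.splits)
  ultimately have "G summable_on UNIV" by simp
  moreover have "Lcre i f w = 0" if "w \<notin> words n" for w
    using that assms by (cases w) (auto simp: Lcre_def words_def fock_def)
  ultimately show ?thesis by (simp add: fock_def G_def)
qed
lemma fock_norm_ge1: assumes "f \<in> fock n" "f [] = 1" shows "1 \<le> fock_norm f"
proof -
  have "sum (\<lambda>w. (cmod (f w))^2) {[]} \<le> infsum (\<lambda>w. (cmod (f w))^2) UNIV"
    using assms by (intro finite_sum_le_infsum) (auto simp: fock_def)
  then show ?thesis using assms by (simp add: fock_norm_def)
qed

lemma parallelogram: "(norm (a+b))^2 + (norm (a-b))^2 = 2*(norm a)^2 + 2*(norm (b::'a::complex_inner))^2"
  using norm_sq_add[of a b] norm_sq_add[of a "-b"] by (simp add: cinner_minus_right)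

lemma bwd:
  fixes S :: "nat \<Rightarrow> 'h::chilbert_space \<Rightarrow> 'h"
  assumes rep: "En_rep n S" and XI: "X \<in> intertwiners n S" and bb: "bounded_below_fock n X"
  shows "\<exists>\<eta>. wandering n S \<eta>"
proof -
  obtain c where c: "c > 0" "\<And>f. f \<in> fock n \<Longrightarrow> c * fock_norm f \<le> norm (X f)"
    using bb unfolding bounded_below_fock_def by blast
  have Xadd: "X (\<lambda>w. f w + g w) = X f + X g" if "f \<in> fock n" "g \<in> fock n" for f g
    using XI that by (simp add: intertwiners_def bounded_fock_map_def)
  have Xscale: "X (\<lambda>w. a * f w) = scaleC a (X f)" if "f \<in> fock n" for a f
    using XI that by (simp add: intertwiners_def bounded_fock_map_def)
  have Xint: "S i (X f) = X (Lcre i f)" if "i < n" "f \<in> fock n" for i f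
    using XI that by (simp add: intertwiners_def)
  have iso: "isometry (S i)" if "i < n" for i using rep that by (simp add: En_rep_def)
  have Slin: "S i (scaleC a x) = scaleC a (S i x)" "S i (x + y) = S i x + S i y" if "i < n" for i a x y
    using iso[OF that] by (simp_all add: isometry_def clinear_op_def)
  have Sdiff: "S i (x - y) = S i x - S i y" if "i < n" for i x y
    using isometry_bl[OF iso[OF that]] by (simp add: linear_diff bounded_linear.linear)
  define F0 where "F0 = {h \<in> fock n. h [] = 0}"
  define N where "N = X ` F0"
  define \<delta> where "\<delta> = (\<lambda>w::nat list. if w = [] then 1 else (0::complex))"
  define x0 where "x0 = X \<delta>"
  have N_add: "y1 + y2 \<in> N" if hyp: "y1 \<in> N" "y2 \<in> N" for y1 y2
  proof -
    obtain f1 f2 where "f1 \<in> F0" "f2 \<in> F0" "y1 = X f1" "y2 = X f2" using hyp N_def by auto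
    then show ?thesis unfolding N_def F0_def
      by (auto intro!: image_eqI[where x="\<lambda>w. f1 w + f2 w"] simp: Xadd fock_add)
  qed
  have N_scale: "scaleC a y \<in> N" if hyp: "y \<in> N" for a y
  proof -
    obtain f where "f \<in> F0" "y = X f" using hyp N_def by auto
    then show ?thesis unfolding N_def F0_def
      by (auto intro!: image_eqI[where x="\<lambda>w. a * f w"] simp: Xscale fock_scale)
  qed
  have N_ne: "X (\<lambda>w. 0) \<in> N" unfolding N_def F0_def using fock_zero by auto
  have N_S: "S i (X f) \<in> N" if "i < n" "f \<in> fock n" for i f
    unfolding N_def F0_def using that by (auto simp: Xint fock_Lcre Lcre_def)
  have N_M: "\<exists>f\<in>fock n. y = X f" if "y \<in> N" for y using that by (auto simp: N_def F0_def)
  have N_SN: "S i y \<in> N" if "i < n" "y \<in> N" for i y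
    using N_M[OF that(2)] N_S[OF that(1)] by blast
  have Sx0: "S i x0 \<in> N" if "i < n" for i
    unfolding x0_def \<delta>_def using N_S[OF that fock_delta] .
  have N_dist: "c^2 \<le> (norm (x0 - y))^2" if hyp: "y \<in> N" for y
  proof -
    obtain h where h: "h \<in> fock n" "h [] = 0" "y = X h" using hyp by (auto simp: N_def F0_def)
    define d where "d = (\<lambda>w. \<delta> w + (-1) * h w)"
    have d: "d \<in> fock n" unfolding d_def \<delta>_def by (intro fock_add fock_scale fock_delta h)
    have "(\<lambda>w. d w + h w) = \<delta>" by (auto simp: d_def)
    then have "x0 = X d + y" using Xadd[OF d h(1)] h by (simp add: x0_def)
    then have "x0 - y = X d" by simp
    moreover have "1 \<le> fock_norm d" using fock_norm_ge1[OF d] h by (simp add: d_def \<delta>_def)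
    moreover have "c * 1 \<le> c * fock_norm d" using c(1) \<open>1 \<le> fock_norm d\<close> by (intro mult_left_mono) auto
    ultimately have "c \<le> norm (x0 - y)" using c(2)[OF d] by simp
    then show ?thesis using c(1) by (simp add: power_mono)
  qed
  define D where "D = Inf ((\<lambda>y. (norm (x0 - y))^2) ` N)"
  have bdd: "bdd_below ((\<lambda>y. (norm (x0 - y))^2) ` N)" by (rule bdd_belowI[of _ 0]) auto
  have D_low: "D \<le> (norm (x0 - y))^2" if "y \<in> N" for y
    unfolding D_def using bdd that by (auto intro: cInf_lower)
  have D_c: "c^2 \<le> D" unfolding D_def using N_ne N_dist by (auto intro!: cInf_greatest)
  have "\<exists>y\<in>N. (norm (x0 - y))^2 < D + 1 / (real k + 1)" for k
  proof -
    have "Inf ((\<lambda>y. (norm (x0 - y))^2) ` N) < D + 1 / (real k + 1)" by (simp add: D_def[symmetric])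
    then show ?thesis using cInf_less_iff[OF _ bdd] N_ne by auto
  qed
  then obtain ys where ys: "\<And>k. ys k \<in> N" "\<And>k. (norm (x0 - ys k))^2 < D + 1 / (real k + 1)"
    by metis
  have cauchy_est: "(norm (ys k - ys m))^2 \<le> 2 / (real k + 1) + 2 / (real m + 1)" for k m
  proof -
    define mid where "mid = scaleR (1/2) (ys k + ys m)"
    have "mid \<in> N" unfolding mid_def scaleR_scaleC using ys(1) N_add N_scale by blast
    then have "D \<le> (norm (x0 - mid))^2" by (rule D_low)
    moreover have "(x0 - ys k) + (x0 - ys m) = scaleR 2 (x0 - mid)"
      by (simp add: mid_def algebra_simps scaleR_2)
    moreover have "(x0 - ys k) - (x0 - ys m) = ys m - ys k" by simp
    ultimately have "4 * D + (norm (ys m - ys k))^2 \<le> 2*(norm (x0 - ys k))^2 + 2*(norm (x0 - ys m))^2"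
      using parallelogram[of "x0 - ys k" "x0 - ys m"] by (simp add: power_mult_distrib)
    then show ?thesis using ys(2)[of k] ys(2)[of m] by (simp add: norm_minus_commute)
  qed
  have "Cauchy ys"
  proof (rule CauchyI)
    fix e :: real assume e: "e > 0"
    obtain M :: nat where M: "4 / e^2 < real M" using reals_Archimedean2 by blast
    have "norm (ys k - ys m) < e" if "k \<ge> M" "m \<ge> M" for k m
    proof -
      have "2 / (real k + 1) \<le> 2 / (real M + 1)" "2 / (real m + 1) \<le> 2 / (real M + 1)"
        using that by (auto intro!: divide_left_mono)
      moreover have "4 / (real M + 1) < e^2"
        using M e by (smt (verit) divide_less_eq le_divide_eq mult.commute of_nat_0_le_iff zero_less_power)
      ultimately have "(norm (ys k - ys m))^2 < e^2" using cauchy_est[of k m] by linarith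
      then show ?thesis using e by (meson power_less_imp_less_base less_imp_le)
    qed
    then show "\<exists>M. \<forall>m\<ge>M. \<forall>n\<ge>M. norm (ys m - ys n) < e" by blast
  qed
  then obtain p where p: "ys \<longlonglongrightarrow> p" using Cauchy_convergent convergent_def by blast
  define C where "C = {z. \<exists>s. (\<forall>k. s k \<in> N) \<and> s \<longlonglongrightarrow> z}"
  have NC: "y \<in> C" if "y \<in> N" for y unfolding C_def using that by (intro CollectI exI[of _ "\<lambda>_. y"]) auto
  have pC: "p \<in> C" unfolding C_def using ys(1) p by blast
  have C_add: "z1 + z2 \<in> C" if hyp: "z1 \<in> C" "z2 \<in> C" for z1 z2
  proof -
    obtain s1 s2 where "\<forall>k. s1 k \<in> N" "s1 \<longlonglongrightarrow> z1" "\<forall>k. s2 k \<in> N" "s2 \<longlonglongrightarrow> z2"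
      using hyp C_def by auto
    then show ?thesis unfolding C_def
      by (intro CollectI exI[of _ "\<lambda>k. s1 k + s2 k"]) (auto intro: N_add tendsto_add)
  qed
  have C_scale: "scaleC a z \<in> C" if hyp: "z \<in> C" for a z
  proof -
    obtain s where "\<forall>k. s k \<in> N" "s \<longlonglongrightarrow> z" using hyp C_def by auto
    then show ?thesis unfolding C_def
      by (intro CollectI exI[of _ "\<lambda>k. scaleC a (s k)"])
        (auto intro: N_scale bounded_linear.tendsto[OF bounded_linear_scaleC])
  qed
  have C_diff: "z1 - z2 \<in> C" if "z1 \<in> C" "z2 \<in> C" for z1 z2
    using C_add[OF that(1) C_scale[OF that(2), of "-1"]] by (simp add: scaleC_minus1)
  have C_S: "S i z \<in> C" if hyp: "i < n" "z \<in> C" for i z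
  proof -
    obtain s where "\<forall>k. s k \<in> N" "s \<longlonglongrightarrow> z" using hyp C_def by auto
    then show ?thesis unfolding C_def
      by (intro CollectI exI[of _ "\<lambda>k. S i (s k)"])
        (auto intro: bounded_linear.tendsto[OF isometry_bl[OF iso[OF hyp(1)]]] N_SN[OF hyp(1)])
  qed
  have C_low: "D \<le> (norm (x0 - z))^2" if hyp: "z \<in> C" for z
  proof -
    obtain s where "\<forall>k. s k \<in> N" "s \<longlonglongrightarrow> z" using hyp C_def by auto
    then show ?thesis
      by (intro LIMSEQ_le_const[of "\<lambda>k. (norm (x0 - s k))^2"]) (auto intro!: tendsto_intros D_low)
  qed
  have pD: "(norm (x0 - p))^2 = D"
  proof (rule antisym)
    have "(\<lambda>k. D + inverse (real (Suc k))) \<longlonglongrightarrow> D + 0"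
      by (intro tendsto_add tendsto_const LIMSEQ_inverse_real_of_nat)
    moreover have "(\<lambda>k. (norm (x0 - ys k))^2) \<longlonglongrightarrow> (norm (x0 - p))^2"
      using p by (intro tendsto_intros)
    ultimately show "(norm (x0 - p))^2 \<le> D"
      using ys(2) by (intro LIMSEQ_le[of "\<lambda>k. (norm (x0 - ys k))^2" _ "\<lambda>k. D + inverse (real (Suc k))"])
        (auto simp: inverse_eq_divide less_imp_le add.commute)
  qed (rule C_low[OF pC])
  define ee where "ee = x0 - p"
  have ee_pos: "norm ee > 0"
  proof -
    have "c^2 > 0" using c(1) by simp
    then have "(norm ee)^2 > 0" using pD D_c unfolding ee_def by linarith
    then show ?thesis by (simp add: zero_less_norm_iff)
  qed
  have orth: "cinner ee z = 0" if "z \<in> C" for z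
  proof -
    define a where "a = cinner ee z"
    define s where "s = 1 / ((norm z)^2 + 1)"
    have pz: "0 < (norm z)^2 + 1" by (simp add: add_nonneg_pos)
    have s: "s > 0" "s * (norm z)^2 < 1" using pz by (auto simp: s_def field_simps)
    define t where "t = complex_of_real s * cnj a"
    have "p + scaleC t z \<in> C" using C_add[OF pC C_scale[OF that]] .
    then have "D \<le> (norm (x0 - (p + scaleC t z)))^2" by (rule C_low)
    also have "x0 - (p + scaleC t z) = ee + scaleC (-t) z"
      by (simp add: ee_def scaleC_minus_left algebra_simps)
    also have "(norm (ee + scaleC (-t) z))^2 = D + (cmod t)^2 * (norm z)^2 - 2 * Re (t * a)"
      using norm_sq_add[of ee "scaleC (-t) z"] pD
      by (simp add: ee_def[symmetric] norm_scaleC cinner_scaleC_right a_def power_mult_distrib)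
    finally have "0 \<le> (cmod t)^2 * (norm z)^2 - 2 * Re (t * a)" by simp
    moreover have "Re (t * a) = s * (cmod a)^2"
      using cmod_power2[of a] by (simp add: t_def algebra_simps power2_eq_square)
    moreover have "(cmod t)^2 = s^2 * (cmod a)^2"
      by (simp add: t_def norm_mult power_mult_distrib)
    ultimately have "0 \<le> s * (cmod a)^2 * (s * (norm z)^2 - 2)"
      by (simp add: algebra_simps power2_eq_square)
    moreover have "s * (norm z)^2 - 2 < 0" using s by simp
    ultimately have "s * (cmod a)^2 \<le> 0"
      using zero_le_mult_iff[of "s * (cmod a)^2" "s * (norm z)^2 - 2"] by linarith
    then have "(cmod a)^2 \<le> 0" using s(1) zero_le_mult_iff[of s "(cmod a)^2"] by (simp add: mult_le_0_iff)
    then show ?thesis unfolding a_def by simp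
  qed
  define \<eta> where "\<eta> = scaleC (complex_of_real (1 / norm ee)) ee"
  have eta_orth: "cinner \<eta> z = 0" "cinner z \<eta> = 0" if "z \<in> C" for z
    using orth[OF that] cinner_commute[of z \<eta>]
    by (simp_all add: \<eta>_def cinner_scaleC_left)
  have eta_norm: "cinner \<eta> \<eta> = 1"
  proof -
    have "norm \<eta> = 1" using ee_pos unfolding \<eta>_def norm_scaleC norm_of_real by simp
    then show ?thesis by (simp add: cinner_self)
  qed
  have SC: "S_word S w \<eta> \<in> C" if "w \<in> words n" "w \<noteq> []" for w
    using that
  proof (induction w)
    case Nil then show ?case by simp
  next
    case (Cons i w)
    then have i: "i < n" and w: "w \<in> words n" by (auto simp: words_def)
    show ?case
    proof (cases "w = []")
      case True
      have "S i \<eta> = scaleC (complex_of_real (1 / norm ee)) (S i x0 - S i p)"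
        by (simp add: \<eta>_def ee_def Slin[OF i] Sdiff[OF i])
      then show ?thesis using True C_scale C_diff NC[OF Sx0[OF i]] C_S[OF i pC] by simp
    next
      case False
      then show ?thesis using Cons.IH[OF w] C_S[OF i] by simp
    qed
  qed
  have "cinner (S_word S v \<eta>) (S_word S w \<eta>) = (if v = w then 1 else 0)"
    if "v \<in> words n" "w \<in> words n" for v w
    using that
  proof (induction v arbitrary: w)
    case Nil
    then show ?case
      using eta_norm eta_orth(1)[OF SC[OF Nil(2)]] by (cases w) auto
  next
    case (Cons i v)
    then have i: "i < n" and v: "v \<in> words n" by (auto simp: words_def)
    show ?case
    proof (cases w)
      case Nil
      then show ?thesis using eta_orth(2)[OF SC[OF Cons(2)]] by simp
    next
      case (Cons j w')
      then have j: "j < n" and w': "w' \<in> words n" using \<open>w \<in> words n\<close> by (auto simp: words_def)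
      show ?thesis
      proof (cases "i = j")
        case True
        then show ?thesis using Cons isometry_cinner[OF iso[OF i]] Cons.IH[OF v w'] by simp
      next
        case False
        then show ?thesis using Cons rep i j by (simp add: En_rep_def)
      qed
    qed
  qed
  then show ?thesis unfolding wandering_def by blast
qed

theorem corollary2p9:
  fixes n :: nat and S :: "nat \<Rightarrow> 'h::chilbert_space \<Rightarrow> 'h"
  assumes "n \<ge> 2" and "En_rep n S"
  shows "(\<exists>\<eta>. wandering n S \<eta>) \<longleftrightarrow> (\<exists>X\<in>intertwiners n S. bounded_below_fock n X)"
  using fwd[OF assms(2)] bwd[OF assms(2)] by blast

end
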